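(* Let $X$ be a subshift with language $\mathcal L$, let $K$ be a positive integer (used in the density $\mathcal D$), let $w\in\mathcal L_n$, and let $\mathcal B=\{z^{(1)},\dots,z^{(p)}\}\subseteq\mathcal L_m$ satisfy: for every $y\in\mathcal L$ with $|y|>\max\{n,m\}$ and all $1\le j<j'\le|y|-\max\{m,n\}$ with $y_{[j,j+n-1]}=y_{[j',j'+n-1]}=w$, there exist $1\le i\le p$ and $j\le k<j'$ with $y_{[k,k+m-1]}=z^{(i)}$. Then for every $x\in X$ there exists $1\le j\le p$ with $$\mathcal D(z^{(j)},x)\ge\frac{1}{p(1+3n/m)}\,\mathcal D(w,x).$$
   Context: A subshift is a nonempty closed $X\subseteq\mathcal A^{\mathbb N}$ ($\mathcal A$ finite) invariant under the left shift; its language $\mathcal L$ is the set of finite nonempty words occurring in its points; $\mathcal L_n$ those of length $n$. (In the paper $K$ is the eventual constant value of $|\mathcal L_{n+1}|-|\mathcal L_n|$.) Upper density: for $x\in X$, $w\in\mathcal L$ with $n=|w|$, let $r(w,x,j)=1$ if $x_{[k,k+n-1]}=w$ for some $k$ with $(j-1)(K+1)n<k\le j(K+1)n$ and $0$ otherwise, and $\mathcal D(w,x)=\limsup_{N\to\infty}\frac1N\sum_{j=1}^Nr(w,x,j)$. *)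

theory Defs
  imports "HOL-Analysis.Analysis"
begin

definition subshift :: "(nat \<Rightarrow> 'a::finite) set \<Rightarrow> bool" where
  "subshift X \<longleftrightarrow> X \<noteq> {}
     \<and> closedin (product_topology (\<lambda>_. discrete_topology (UNIV::'a set)) (UNIV::nat set)) X
     \<and> (\<forall>x\<in>X. (\<lambda>i. x (Suc i)) \<in> X)"

definition factor :: "(nat \<Rightarrow> 'a) \<Rightarrow> nat \<Rightarrow> nat \<Rightarrow> 'a list" where
  "factor x k n = map x [k..<k+n]"

definition language :: "(nat \<Rightarrow> 'a) set \<Rightarrow> 'a list set" where
  "language X = {w. w \<noteq> [] \<and> (\<exists>x\<in>X. \<exists>k. factor x k (length w) = w)}"

text \<open>Subword of a finite word, 1-based: y_[j, j+n-1].\<close>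
definition subword :: "'a list \<Rightarrow> nat \<Rightarrow> nat \<Rightarrow> 'a list" where
  "subword y j n = take n (drop (j - 1) y)"

definition occ_ind :: "nat \<Rightarrow> 'a list \<Rightarrow> (nat \<Rightarrow> 'a) \<Rightarrow> nat \<Rightarrow> real" where
  "occ_ind K w x j = (let n = length w in
     if \<exists>k. (j - 1) * (K + 1) * n < k \<and> k \<le> j * (K + 1) * n \<and> factor x k n = w then 1 else 0)"

definition upper_density :: "nat \<Rightarrow> 'a list \<Rightarrow> (nat \<Rightarrow> 'a) \<Rightarrow> ereal" where
  "upper_density K w x =
     limsup (\<lambda>N. ereal ((1 / real N) * (\<Sum>j=1..N. occ_ind K w x j)))"

end

theory Submission
  imports Defs
begin

lemma factor_take_drop:
  assumes "b + a \<le> l"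
  shows "take a (drop b (factor x k l)) = factor x (k+b) a"
  using assms unfolding factor_def by (simp add: take_map drop_map add.assoc)

lemma length_factor[simp]: "length (factor x k l) = l"
  unfolding factor_def by simp

lemma factor_lang: "x \<in> X \<Longrightarrow> l > 0 \<Longrightarrow> factor x k l \<in> language X"
  unfolding language_def by (auto simp: factor_def)

lemma occ_sum:
  "(\<Sum>j=1..N. occ_ind K u x j) = real (card {j\<in>{1..N}. \<exists>k. (j - 1) * (K + 1) * length u < k \<and> k \<le> j * (K + 1) * length u \<and> factor x k (length u) = u})"
  unfolding occ_ind_def Let_def real_of_card
  by (rule sum.inter_filter[symmetric]) simp

lemma sorted_nth_gap:
  fixes xs :: "nat list"
  assumes "sorted_wrt (<) xs" "i \<le> j" "j < length xs"
  shows "xs!i + (j - i) \<le> xs!j"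
  using assms(2,3)
proof (induction j)
  case 0 then show ?case by simp
next
  case (Suc j)
  show ?case
  proof (cases "i = Suc j")
    case True then show ?thesis by simp
  next
    case False
    then have "i \<le> j" using Suc by simp
    then have "xs!i + (j-i) \<le> xs!j" using Suc by simp
    moreover have "xs!j < xs!(Suc j)" using assms(1) Suc.prems by (simp add: sorted_wrt_iff_nth_less)
    ultimately show ?thesis using \<open>i \<le> j\<close> by simp
  qed
qed
lemma aux_field: "(P::real) > 0 \<Longrightarrow> Mr > 0 \<Longrightarrow> Nr > 0 \<Longrightarrow> A > 0 \<Longrightarrow> 1 / (P * (A / Mr)) * (A / Nr * P * r * (Nr / Mr)) = r"
  by (simp add: field_simps)

lemma comb:
  fixes Pw Pz :: "nat \<Rightarrow> bool" and B n m N :: nat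
  assumes betw: "\<And>k k'. 0 < k \<Longrightarrow> k < k' \<Longrightarrow> Pw k \<Longrightarrow> Pw k' \<Longrightarrow> \<exists>q. k \<le> q \<and> q < k' \<and> Pz q"
    and B: "B > 0" and n: "n > 0" and m: "m > 0"
  shows "(card {j\<in>{1..N}. \<exists>k. (j - 1) * B * n < k \<and> k \<le> j * B * n \<and> Pw k} - 1) * n
     \<le> (m + 3*n) * card {c\<in>{1..N*n div m + 1}. \<exists>q. (c - 1) * B * m < q \<and> q \<le> c * B * m \<and> Pz q}"
proof -
  define L where "L = B*n"
  define M where "M = B*m"
  have Lpos: "L > 0" and Mpos: "M > 0" using B n m by (auto simp: L_def M_def)
  define J where "J = {j\<in>{1..N}. \<exists>k. (j - 1) * L < k \<and> k \<le> j * L \<and> Pw k}"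
  define Z where "Z = {c\<in>{1..N*n div m + 1}. \<exists>q. (c - 1) * M < q \<and> q \<le> c * M \<and> Pz q}"
  have eqJ: "{j\<in>{1..N}. \<exists>k. (j - 1) * B * n < k \<and> k \<le> j * B * n \<and> Pw k} = J"
    unfolding J_def L_def by (simp add: mult.assoc)
  have eqZ: "{c\<in>{1..N*n div m + 1}. \<exists>q. (c - 1) * B * m < q \<and> q \<le> c * B * m \<and> Pz q} = Z"
    unfolding Z_def M_def by (simp add: mult.assoc)
  define js where "js = sorted_list_of_set J"
  define A where "A = length js"
  have finJ: "finite J" unfolding J_def by simp
  have finZ: "finite Z" unfolding Z_def by simp
  have A: "A = card J" unfolding A_def js_def using finJ by simp
  have sjs: "sorted_wrt (<) js" unfolding js_def by (simp add: strict_sorted_list_of_set)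
  have setjs: "set js = J" unfolding js_def using finJ by simp
  have jsJ: "js!t \<in> J" if "t < A" for t using setjs A_def nth_mem that by blast
  define kk where "kk j = (SOME k. (j - 1) * L < k \<and> k \<le> j * L \<and> Pw k)" for j
  have kk: "(j - 1) * L < kk j \<and> kk j \<le> j * L \<and> Pw (kk j)" if "j \<in> J" for j
  proof -
    have "\<exists>k. (j - 1) * L < k \<and> k \<le> j * L \<and> Pw k" using that unfolding J_def by auto
    then show ?thesis unfolding kk_def by (rule someI_ex)
  qed
  define k where "k t = kk (js!t)" for t
  have kprop: "(js!t - 1) * L < k t \<and> k t \<le> js!t * L \<and> Pw (k t)" if "t < A" for t
    using kk[OF jsJ[OF that]] k_def by auto
  have jsle: "1 \<le> js!t \<and> js!t \<le> N" if "t < A" for t using jsJ[OF that] J_def by auto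
  have mono: "js!t < js!(Suc t)" if "Suc t < A" for t
    using sjs that A_def sorted_wrt_iff_nth_less by auto
  have kpos: "0 < k t" if "t < A" for t using kprop[OF that] by auto
  have klt: "k t < k (Suc t)" if "Suc t < A" for t
  proof -
    have "k t \<le> js!t * L" using kprop that by auto
    also have "\<dots> \<le> (js!(Suc t) - 1) * L" using mono[OF that] by (intro mult_right_mono) auto
    also have "\<dots> < k (Suc t)" using kprop that by auto
    finally show ?thesis .
  qed
  define q where "q t = (SOME q. k t \<le> q \<and> q < k (Suc t) \<and> Pz q)" for t
  have qprop: "k t \<le> q t \<and> q t < k (Suc t) \<and> Pz (q t)" if "Suc t < A" for t
  proof -
    have "\<exists>q. k t \<le> q \<and> q < k (Suc t) \<and> Pz q"
      using betw[OF kpos klt[OF that]] kprop that by (meson Suc_lessD)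
    then show ?thesis unfolding q_def by (rule someI_ex)
  qed
  define c where "c t = (q t - 1) div M + 1" for t
  have qpos: "q t \<ge> 1" if "Suc t < A" for t using qprop[OF that] kpos[of t] that by auto
  have cblock: "(c t - 1) * M < q t \<and> q t \<le> c t * M" if "Suc t < A" for t
  proof -
    define r where "r = q t - 1"
    have qr: "q t = r + 1" using qpos[OF that] unfolding r_def by simp
    have ct: "c t = r div M + 1" unfolding c_def r_def by simp
    have h1: "r div M * M \<le> r" by (rule div_times_less_eq_dividend)
    have m1: "r mod M < M" using Mpos by simp
    have h2: "(r div M + 1) * M = r div M * M + M" by (simp add: distrib_right)
    have h3: "r div M * M + r mod M = r" by (rule div_mult_mod_eq)
    have e1: "(c t - 1) * M = r div M * M" using ct by simp
    have e2: "c t * M = r div M * M + M" using ct h2 by simp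
    show ?thesis unfolding e1 e2 qr using h1 h3 m1 by linarith
  qed
  have qN: "q t < N * L" if "Suc t < A" for t
  proof -
    have "q t < k (Suc t)" using qprop[OF that] by auto
    also have "\<dots> \<le> js!(Suc t) * L" using kprop[OF that] by auto
    also have "\<dots> \<le> N * L" using jsle[OF that] by (intro mult_right_mono) auto
    finally show ?thesis .
  qed
  have cZ: "c t \<in> Z" if "Suc t < A" for t
  proof -
    have "(q t - 1) div M \<le> (N * L) div M" using qN[OF that] by (intro div_le_mono) auto
    also have "(N * L) div M = N * n div m"
    proof -
      have e: "N * L = B * (N*n)" unfolding L_def by simp
      have "B * (N*n) div (B * m) = N * n div m" using B div_mult_mult1[of B "N*n" m] by simp
      then show ?thesis unfolding M_def e .
    qed
    finally have "c t \<le> N * n div m + 1" unfolding c_def by simp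
    then show ?thesis unfolding Z_def using cblock[OF that] qprop[OF that] by (auto simp: c_def)
  qed
  define D where "D = {..<A - 1}"
  have img: "c ` D \<subseteq> Z" using cZ unfolding D_def by auto
  have pair: "(t' - t) * n < m + 2 * n" if "t \<in> D" "t' \<in> D" "t < t'" "c t = c t'" for t t'
  proof -
    have ta: "Suc t < A" "Suc t' < A" using that unfolding D_def by auto
    have "q t' < q t + M"
    proof -
      have "q t' \<le> c t' * M" using cblock[OF ta(2)] by auto
      also have "\<dots> = (c t - 1) * M + M" using that(4) unfolding c_def by simp
      also have "\<dots> < q t + M" using cblock[OF ta(1)] by auto
      finally show ?thesis .
    qed
    moreover have "q t < js!(Suc t) * L"
      using qprop[OF ta(1)] kprop[OF ta(1)] by (meson less_le_trans)
    moreover have "(js!t' - 1) * L < q t'"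
      using qprop[OF ta(2)] kprop[of t'] ta by (meson Suc_lessD less_le_trans)
    moreover have "js!(Suc t) + (t' - Suc t) \<le> js!t'"
      using sorted_nth_gap[OF sjs, of "Suc t" t'] ta that A_def by auto
    moreover have "js!(Suc t) \<ge> 1" using jsle ta by auto
    ultimately have "(js!(Suc t) - 1 + (t' - Suc t)) * L < js!(Suc t) * L + M"
    proof -
      assume a: "q t' < q t + M" "q t < js!(Suc t) * L" "(js!t' - 1) * L < q t'"
        "js!(Suc t) + (t' - Suc t) \<le> js!t'" "js!(Suc t) \<ge> 1"
      have "(js!(Suc t) - 1 + (t' - Suc t)) * L \<le> (js!t' - 1) * L"
        using a(4,5) by (intro mult_right_mono) (arith, simp)
      then show ?thesis using a(1-3) by linarith
    qed
    then have "(t' - Suc t) * L < L + M"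
      using \<open>js!(Suc t) \<ge> 1\<close> by (simp add: algebra_simps)  
    then have "(t' - Suc t) * n * B < (n + m) * B" unfolding L_def M_def by (simp add: algebra_simps)
    then have "(t' - Suc t) * n < n + m" by (simp only: mult_less_cancel2)
    then show ?thesis using that(3) by (simp add: algebra_simps Suc_diff_Suc)
  qed
  have fib: "card {t\<in>D. c t = v} * n \<le> m + 3*n" if "v \<in> c ` D" for v
  proof -
    define F where "F = {t\<in>D. c t = v}"
    have finF: "finite F" "F \<noteq> {}" using that unfolding F_def D_def by auto
    define a where "a = Min F"
    define b where "b = Max F"
    have ab: "a \<in> F" "b \<in> F" "a \<le> b" using finF unfolding a_def b_def by auto
    have "F \<subseteq> {a..b}" using finF unfolding a_def b_def by auto
    then have cF: "card F \<le> b - a + 1" using card_mono[of "{a..b}" F] by simp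
    show ?thesis
    proof (cases "a = b")
      case True
      then have "card F \<le> 1" using cF by simp
      then show ?thesis unfolding F_def[symmetric] using mult_le_mono1[of "card F" 1 n] by linarith
    next
      case False
      then have "(b - a) * n < m + 2 * n" using pair[of a b] ab unfolding F_def by auto
      then have "(b - a + 1) * n < m + 3 * n" by (simp add: algebra_simps)
      moreover have "card F * n \<le> (b - a + 1) * n" using cF by (rule mult_right_mono) simp
      ultimately show ?thesis unfolding F_def by simp
    qed
  qed
  have "card D \<le> card (\<Union>v\<in>c ` D. {t\<in>D. c t = v})"
    by (intro card_mono) (auto simp: D_def)
  also have "\<dots> \<le> (\<Sum>v\<in>c ` D. card {t\<in>D. c t = v})"
    by (rule card_UN_le) (simp add: D_def)
  finally have "card D * n \<le> (\<Sum>v\<in>c ` D. card {t\<in>D. c t = v}) * n" by simp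
  also have "\<dots> = (\<Sum>v\<in>c ` D. card {t\<in>D. c t = v} * n)" by (simp add: sum_distrib_right)
  also have "\<dots> \<le> (\<Sum>v\<in>c ` D. m + 3*n)" using fib by (rule sum_mono)
  also have "\<dots> = card (c ` D) * (m + 3*n)" by simp
  also have "\<dots> \<le> card Z * (m + 3*n)" using card_mono[OF finZ img] by simp
  finally have "card D * n \<le> card Z * (m + 3*n)" .
  moreover have "card D = card J - 1" unfolding D_def A by simp
  ultimately show ?thesis unfolding eqJ eqZ by (simp add: mult.commute)
qed

theorem mainTheorem17:
  fixes X :: "(nat \<Rightarrow> 'a::finite) set"
    and K n m p :: nat and w :: "'a list" and z :: "nat \<Rightarrow> 'a list"
  assumes "subshift X"
    and "K > 0"
    and "w \<in> language X" and "length w = n"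
    and "p \<ge> 1"
    and "\<forall>i\<in>{1..p}. z i \<in> language X \<and> length (z i) = m"
    and "\<forall>y\<in>language X. length y > max n m \<longrightarrow>
           (\<forall>j j'. 1 \<le> j \<and> j < j' \<and> j' \<le> length y - max m n
              \<and> subword y j n = w \<and> subword y j' n = w \<longrightarrow>
              (\<exists>i\<in>{1..p}. \<exists>k. j \<le> k \<and> k < j' \<and> subword y k m = z i))"
  shows "\<forall>x\<in>X. \<exists>j\<in>{1..p}.
           upper_density K (z j) x
             \<ge> ereal (1 / (real p * (1 + 3 * real n / real m))) * upper_density K w x"
proof
  fix x assume xX: "x \<in> X"
  have n: "n > 0" using assms(3,4) unfolding language_def by auto
  have "z 1 \<in> language X \<and> length (z 1) = m" using assms(5,6) by auto
  then have m: "m > 0" unfolding language_def by auto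
  define Pw where "Pw k = (factor x k n = w)" for k
  define Pz where "Pz q = (\<exists>i\<in>{1..p}. factor x q m = z i)" for q
  have betw: "\<exists>q. k \<le> q \<and> q < k' \<and> Pz q" if "0 < k" "k < k'" "Pw k" "Pw k'" for k k'
  proof -
    define l where "l = k' - k + 1 + max n m"
    define y where "y = factor x k l"
    have ly: "length y = l" unfolding y_def by simp
    have yL: "y \<in> language X" unfolding y_def by (rule factor_lang[OF xX]) (simp add: l_def)
    have s1: "subword y 1 n = w" unfolding subword_def y_def
      using factor_take_drop[of 0 n l x k] that(3) unfolding Pw_def l_def by simp
    have s2: "subword y (k' - k + 1) n = w" unfolding subword_def y_def
      using factor_take_drop[of "k' - k" n l x k] that(2,4) unfolding Pw_def l_def by simp
    have "length y > max n m" unfolding ly l_def by (simp add: less_Suc_eq_le)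
    moreover have "1 \<le> (1::nat) \<and> 1 < k' - k + 1 \<and> k' - k + 1 \<le> length y - max m n
              \<and> subword y 1 n = w \<and> subword y (k' - k + 1) n = w"
      using s1 s2 ly l_def that(2) by (simp add: max.commute)
    ultimately obtain i kz where i: "i \<in> {1..p}" "1 \<le> kz" "kz < k' - k + 1" "subword y kz m = z i"
      using assms(7) yL by blast
    have "subword y kz m = factor x (k + (kz - 1)) m" unfolding subword_def y_def
      by (rule factor_take_drop) (use i in \<open>auto simp: l_def\<close>)
    then have "Pz (k + (kz - 1))" unfolding Pz_def using i(1,4) by (intro bexI[of _ i]) auto
    then show ?thesis using i by (intro exI[of _ "k + (kz - 1)"]) auto
  qed
  define Sw where "Sw N = (\<Sum>j=1..N. occ_ind K w x j)" for N
  define Sz where "Sz i N = (\<Sum>j=1..N. occ_ind K (z i) x j)" for i N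
  define N2 where "N2 N = N*n div m + 1" for N
  have occ_nn: "occ_ind K u x j \<ge> 0" for u j unfolding occ_ind_def Let_def by simp
  have key: "(Sw N - 1) * n \<le> (m + 3*n) * (\<Sum>i\<in>{1..p}. Sz i (N2 N))" for N
  proof -
    define J where "J = {j\<in>{1..N}. \<exists>k. (j - 1) * (K+1) * n < k \<and> k \<le> j * (K+1) * n \<and> Pw k}"
    define Zi where "Zi i = {c\<in>{1..N*n div m + 1}. \<exists>q. (c - 1) * (K+1) * m < q \<and> q \<le> c * (K+1) * m \<and> factor x q m = z i}" for i
    define Z where "Z = {c\<in>{1..N*n div m + 1}. \<exists>q. (c - 1) * (K+1) * m < q \<and> q \<le> c * (K+1) * m \<and> Pz q}"
    have c: "(card J - 1) * n \<le> (m + 3*n) * card Z"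
      unfolding J_def Z_def by (rule comb[OF betw]) (use n m in auto)
    have SwJ: "Sw N = real (card J)" unfolding Sw_def J_def Pw_def occ_sum assms(4) ..
    have SzZ: "Sz i (N2 N) = real (card (Zi i))" if "i \<in> {1..p}" for i
      unfolding Sz_def Zi_def occ_sum N2_def using assms(6) that by simp
    have "Z \<subseteq> (\<Union>i\<in>{1..p}. Zi i)" unfolding Z_def Zi_def Pz_def by blast
    then have "card Z \<le> card (\<Union>i\<in>{1..p}. Zi i)" by (intro card_mono) (auto simp: Zi_def)
    also have "\<dots> \<le> (\<Sum>i\<in>{1..p}. card (Zi i))" by (rule card_UN_le) simp
    finally have "real (card Z) \<le> (\<Sum>i\<in>{1..p}. real (card (Zi i)))"
      by (metis of_nat_le_iff of_nat_sum)
    also have "\<dots> = (\<Sum>i\<in>{1..p}. Sz i (N2 N))" using SzZ by (intro sum.cong) auto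
    finally have "real (card Z) \<le> (\<Sum>i\<in>{1..p}. Sz i (N2 N))" .
    moreover have "(Sw N - 1) * n \<le> real ((card J - 1) * n)"
    proof -
      have "real (card J) - 1 \<le> real (card J - 1)" by (cases "card J") auto
      then have "(Sw N - 1) * n \<le> real (card J - 1) * real n" unfolding SwJ by (rule mult_right_mono) simp
      then show ?thesis by simp
    qed
    moreover have "real ((card J - 1) * n) \<le> (m + 3*n) * real (card Z)"
      using c by (metis of_nat_le_iff of_nat_mult of_nat_add of_nat_numeral)
    ultimately show ?thesis
      by (smt (verit) mult_left_mono of_nat_0_le_iff)
  qed
  show "\<exists>j\<in>{1..p}. upper_density K (z j) x
             \<ge> ereal (1 / (real p * (1 + 3 * real n / real m))) * upper_density K w x"
  proof (rule ccontr)
    define cc where "cc = 1 / (real p * (1 + 3 * real n / real m))"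
    define Dw where "Dw = upper_density K w x"
    assume "\<not> ?thesis"
    then have lt: "\<forall>i\<in>{1..p}. upper_density K (z i) x < ereal cc * Dw"
      unfolding cc_def Dw_def by (auto simp: not_le)
    define Mx where "Mx = Max ((\<lambda>i. upper_density K (z i) x) ` {1..p})"
    have "Mx < ereal cc * Dw" using lt assms(5) unfolding Mx_def by (subst Max_less_iff) auto
    then obtain r where r1: "Mx < ereal r" and r2: "ereal r < ereal cc * Dw" using ereal_dense2 by blast
    have "\<forall>i\<in>{1..p}. eventually (\<lambda>M. ereal (1 / real M * Sz i M) < ereal r) sequentially"
    proof
      fix i assume i: "i \<in> {1..p}"
      have "upper_density K (z i) x \<le> Mx" unfolding Mx_def using i by (intro Max_ge) auto
      then have "upper_density K (z i) x < ereal r" using r1 by simp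
      then show "eventually (\<lambda>M. ereal (1 / real M * Sz i M) < ereal r) sequentially"
        unfolding upper_density_def Sz_def by (rule Limsup_lessD)
    qed
    then have "eventually (\<lambda>M. \<forall>i\<in>{1..p}. ereal (1 / real M * Sz i M) < ereal r) sequentially"
      by (rule eventually_ball_finite[rotated]) simp
    then obtain M0 where M0': "\<forall>M\<ge>M0. \<forall>i\<in>{1..p}. ereal (1 / real M * Sz i M) < ereal r"
      unfolding eventually_sequentially by blast
    have M0: "\<And>M i. M \<ge> M0 \<Longrightarrow> i \<in> {1..p} \<Longrightarrow> 1 / real M * Sz i M < r"
      using M0' by simp
    have Sznn: "Sz i M \<ge> 0" for i M unfolding Sz_def by (intro sum_nonneg occ_nn)
    have rpos: "r \<ge> 0"
    proof -
      have i1: "1 \<in> {1..p}" using assms(5) by simp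
      have "0 \<le> 1 / real M0 * Sz 1 M0" using Sznn[of 1 M0] by simp
      then show ?thesis using M0[OF order.refl i1] by linarith
    qed
    define c1 where "c1 = (real m + 3 * real n) / real n"
    define G where "G = c1 * real p * r * (real n / real m)"
    define g where "g N = 1 / real N + c1 * real p * r * (real n / real m + 1 / real N)" for N
    have glim: "g \<longlonglongrightarrow> G"
    proof -
      have "g \<longlonglongrightarrow> 0 + c1 * real p * r * (real n / real m + 0)"
        unfolding g_def by (intro tendsto_intros lim_1_over_n)
      then show ?thesis unfolding G_def by simp
    qed
    have ccG: "cc * G = r"
    proof -
      have pp: "real p > 0" "real m > 0" "real n > 0" using n m assms(5) by auto
      have e1: "1 + 3 * real n / real m = (real m + 3 * real n) / real m" using pp by (simp add: field_simps)
      have e2: "real m + 3 * real n > 0" using pp by simp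
      have aux: "1 / (P * (A / Mr)) * (A / Nr * P * r * (Nr / Mr)) = r"
        if "(P::real) > 0" "Mr > 0" "Nr > 0" "A > 0" for P A Mr Nr using that by (simp add: field_simps)
      show ?thesis unfolding cc_def G_def c1_def e1 using aux[OF pp(1) pp(2) pp(3) e2] .
    qed
    have ccpos: "cc > 0" unfolding cc_def using n m assms(5)
      by (intro divide_pos_pos mult_pos_pos add_pos_nonneg) auto
    have "ereal G < Dw"
    proof (cases Dw)
      case (real d)
      then have "r < cc * d" using r2 by simp
      then have "cc * G < cc * d" using ccG by simp
      then show ?thesis using real ccpos by simp
    next
      case PInf then show ?thesis by simp
    next
      case MInf then show ?thesis using r2 ccpos by simp
    qed
    then obtain s where s1: "ereal G < ereal s" and s2: "ereal s < Dw" using ereal_dense2 by blast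
    have "eventually (\<lambda>N. g N < s) sequentially" using order_tendstoD(2)[OF glim] s1 by simp
    moreover have "eventually (\<lambda>N. N \<ge> max 1 (M0 * m)) sequentially" by (rule eventually_ge_at_top)
    ultimately have "eventually (\<lambda>N. ereal (1 / real N * Sw N) \<le> ereal s) sequentially"
    proof eventually_elim
      case (elim N)
      then have N1: "N \<ge> 1" and NM: "N \<ge> M0 * m" by auto
      have "N2 N \<ge> M0"
      proof -
        have "M0 = M0 * m div m" using m by simp
        also have "\<dots> \<le> N * n div m"
        proof (rule div_le_mono)
          have "N \<le> N * n" using n by simp
          then show "M0 * m \<le> N * n" using NM by linarith
        qed
        finally show ?thesis unfolding N2_def by simp
      qed
      then have hz: "Sz i (N2 N) \<le> r * real (N2 N)" if "i \<in> {1..p}" for i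
        using M0[of "N2 N" i] that unfolding N2_def by (simp add: field_simps)
      define T where "T = (\<Sum>i\<in>{1..p}. Sz i (N2 N))"
      have h2: "T \<le> real p * (r * real (N2 N))" unfolding T_def
        using sum_mono[of "{1..p}" "\<lambda>i. Sz i (N2 N)" "\<lambda>i. r * real (N2 N)"] hz by simp
      have h1: "Sw N \<le> 1 + c1 * T" using key[of N] n unfolding c1_def T_def
        by (simp add: field_simps)
      have "real (N * n div m) * real m \<le> real (N * n)"
      proof -
        have "N * n div m * m \<le> N * n" by (rule div_times_less_eq_dividend)
        then show ?thesis by (simp only: of_nat_mult[symmetric] of_nat_le_iff)
      qed
      then have "real (N * n div m) \<le> real N * real n / real m" using m by (simp add: field_simps)
      then have h3: "real (N2 N) \<le> real N * real n / real m + 1" unfolding N2_def by simp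
      have c1nn: "c1 \<ge> 0" unfolding c1_def by simp
      have "Sw N \<le> 1 + c1 * (real p * (r * (real N * real n / real m + 1)))"
      proof -
        have "c1 * T \<le> c1 * (real p * (r * real (N2 N)))" using h2 c1nn by (rule mult_left_mono)
        also have "\<dots> \<le> c1 * (real p * (r * (real N * real n / real m + 1)))"
          using h3 rpos c1nn by (intro mult_left_mono) auto
        finally show ?thesis using h1 by linarith
      qed
      then have "1 / real N * Sw N \<le> 1 / real N * (1 + c1 * (real p * (r * (real N * real n / real m + 1))))"
        by (intro mult_left_mono) auto
      also have "\<dots> = g N" unfolding g_def using N1 m by (simp add: field_simps)
      finally show ?case using elim by simp
    qed
    then have "Dw \<le> ereal s" unfolding Dw_def upper_density_def Sw_def by (rule Limsup_bounded)
    then show False using s2 by simp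
  qed
qed

end
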